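(* Let $\mathcal{A}=\{A_1,\dots,A_J\}$ be a partition of $\mathcal{X}$ with $\pi_k[A_j]>0$ for all $k,j$. For every $i,j\in\{1,\dots,J\}$ and every $k\in\{0,\dots,N-1\}$, $$\frac{\int_{A_i}\int_{A_j}\min\{\pi_k(z)\pi_{k+1}(w),\,\pi_k(w)\pi_{k+1}(z)\}\,\lambda(dw)\,\lambda(dz)}{\pi_k[A_i]\,\pi_{k+1}[A_j]}\;\ge\;\delta(\mathcal{A})^2.$$
   Context: $(\mathcal{X},\mathcal{F},\lambda)$ is a measure space; $N\ge1$; $\pi_0,\dots,\pi_N$ are probability densities w.r.t. $\lambda$, and $\pi_k[A]=\int_A\pi_k\,d\lambda$. Overlap: $\delta(\mathcal{A})=\min_{|k-l|=1,\ j\in\{1,\dots,J\}}\frac{1}{\pi_k[A_j]}\int_{A_j}\min\{\pi_k(z),\pi_l(z)\}\lambda(dz)$, where $k,l$ range over $\{0,\dots,N\}$. (The left-hand side is the stationary probability of accepting a proposed swap between levels $k$ and $k+1$ given $x_{[k]}\in A_i$, $x_{[k+1]}\in A_j$.) *)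

theory Defs
  imports "HOL-Analysis.Analysis"
begin

definition dmass :: "'a measure \<Rightarrow> ('a \<Rightarrow> real) \<Rightarrow> 'a set \<Rightarrow> ennreal" where
  "dmass M p A = (\<integral>\<^sup>+ z \<in> A. ennreal (p z) \<partial>M)"

definition overlap :: "'a measure \<Rightarrow> (nat \<Rightarrow> 'a \<Rightarrow> real) \<Rightarrow> nat \<Rightarrow> (nat \<Rightarrow> 'a set) \<Rightarrow> nat \<Rightarrow> ennreal" where
  "overlap M \<pi> N A J =
     Min {(\<integral>\<^sup>+ z \<in> A j. ennreal (min (\<pi> k z) (\<pi> l z)) \<partial>M) / dmass M (\<pi> k) (A j) | k l j.
           k \<le> N \<and> l \<le> N \<and> (l = k + 1 \<or> k = l + 1) \<and> j \<in> {1..J}}"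

end

theory Submission
  imports Defs
begin

theorem mainTheorem5:
  fixes M :: "'a measure" and \<pi> :: "nat \<Rightarrow> 'a \<Rightarrow> real" and N J :: nat
    and A :: "nat \<Rightarrow> 'a set"
  assumes N_pos: "N \<ge> 1"
    and dens_meas: "\<And>k. k \<le> N \<Longrightarrow> \<pi> k \<in> borel_measurable M"
    and dens_nonneg: "\<And>k x. k \<le> N \<Longrightarrow> x \<in> space M \<Longrightarrow> \<pi> k x \<ge> 0"
    and dens_prob: "\<And>k. k \<le> N \<Longrightarrow> (\<integral>\<^sup>+ x. ennreal (\<pi> k x) \<partial>M) = 1"
    and J_pos: "J \<ge> 1"
    and A_sets: "\<And>j. j \<in> {1..J} \<Longrightarrow> A j \<in> sets M"
    and A_disj: "disjoint_family_on A {1..J}"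
    and A_cover: "(\<Union>j\<in>{1..J}. A j) = space M"
    and A_pos: "\<And>k j. k \<le> N \<Longrightarrow> j \<in> {1..J} \<Longrightarrow> dmass M (\<pi> k) (A j) > 0"
    and ij: "i \<in> {1..J}" "j \<in> {1..J}"
    and k: "k < N"
  shows "(\<integral>\<^sup>+ z \<in> A i. (\<integral>\<^sup>+ w \<in> A j.
            ennreal (min (\<pi> k z * \<pi> (Suc k) w) (\<pi> k w * \<pi> (Suc k) z)) \<partial>M) \<partial>M)
          / (dmass M (\<pi> k) (A i) * dmass M (\<pi> (Suc k)) (A j))
         \<ge> (overlap M \<pi> N A J)\<^sup>2"
proof -
  define m where "m z = ennreal (min (\<pi> k z) (\<pi> (Suc k) z))" for z
  have k0: "k \<le> N" and k1: "Suc k \<le> N" using k by auto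
  have mmeas: "m \<in> borel_measurable M" unfolding m_def
    using dens_meas[OF k0] dens_meas[OF k1] by measurable
  have Ai: "A i \<in> sets M" and Aj: "A j \<in> sets M" using A_sets ij by auto
  define a where "a = (\<integral>\<^sup>+ z \<in> A i. m z \<partial>M)"
  define b where "b = (\<integral>\<^sup>+ z \<in> A j. m z \<partial>M)"
  define P where "P = dmass M (\<pi> k) (A i)"
  define Q where "Q = dmass M (\<pi> (Suc k)) (A j)"
  have fin: "dmass M (\<pi> kk) S < top" if "kk \<le> N" for kk S
  proof -
    have "dmass M (\<pi> kk) S \<le> (\<integral>\<^sup>+ x. ennreal (\<pi> kk x) \<partial>M)"
      unfolding dmass_def by (intro nn_integral_mono) (auto split: split_indicator)
    also have "\<dots> = 1" using dens_prob[OF that] .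
    finally show ?thesis by (simp add: order_le_less_trans)
  qed
  have Pf: "P < top" and Qf: "Q < top" unfolding P_def Q_def using fin k0 k1 by auto
  have "(\<integral>\<^sup>+ z \<in> A i. (\<integral>\<^sup>+ w \<in> A j.
            ennreal (min (\<pi> k z * \<pi> (Suc k) w) (\<pi> k w * \<pi> (Suc k) z)) \<partial>M) \<partial>M)
        \<ge> (\<integral>\<^sup>+ z \<in> A i. (\<integral>\<^sup>+ w \<in> A j. m z * m w \<partial>M) \<partial>M)"
  proof (rule nn_integral_mono)
    fix z assume "z \<in> space M"
    show "(\<integral>\<^sup>+ w \<in> A j. m z * m w \<partial>M) * indicator (A i) z \<le> (\<integral>\<^sup>+ w \<in> A j.
            ennreal (min (\<pi> k z * \<pi> (Suc k) w) (\<pi> k w * \<pi> (Suc k) z)) \<partial>M) * indicator (A i) z" 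
    proof (cases "z \<in> A i")
      case True
      hence zs: "z \<in> space M" using Ai sets.sets_into_space by auto
      show ?thesis
      proof (rule mult_right_mono[OF nn_integral_mono])
        fix w assume ws: "w \<in> space M"
        have a0: "\<pi> k z \<ge> 0" "\<pi> (Suc k) z \<ge> 0" "\<pi> k w \<ge> 0" "\<pi> (Suc k) w \<ge> 0"
          using dens_nonneg k0 k1 zs ws by auto
        have "min (\<pi> k z) (\<pi> (Suc k) z) * min (\<pi> k w) (\<pi> (Suc k) w)
              \<le> min (\<pi> k z * \<pi> (Suc k) w) (\<pi> k w * \<pi> (Suc k) z)"
        proof (rule min.boundedI)
          show "min (\<pi> k z) (\<pi> (Suc k) z) * min (\<pi> k w) (\<pi> (Suc k) w) \<le> \<pi> k z * \<pi> (Suc k) w"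
            using a0 by (intro mult_mono) auto
          have "min (\<pi> k z) (\<pi> (Suc k) z) * min (\<pi> k w) (\<pi> (Suc k) w) \<le> \<pi> (Suc k) z * \<pi> k w"
            using a0 by (intro mult_mono) auto
          then show "min (\<pi> k z) (\<pi> (Suc k) z) * min (\<pi> k w) (\<pi> (Suc k) w) \<le> \<pi> k w * \<pi> (Suc k) z"
            by (simp add: mult.commute)
        qed
        then have "m z * m w \<le> ennreal (min (\<pi> k z * \<pi> (Suc k) w) (\<pi> k w * \<pi> (Suc k) z))"
          unfolding m_def using a0
          by (simp add: ennreal_mult'[symmetric] ennreal_leI)
        then show "m z * m w * indicator (A j) w \<le> ennreal (min (\<pi> k z * \<pi> (Suc k) w) (\<pi> k w * \<pi> (Suc k) z)) * indicator (A j) w"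
          by (rule mult_right_mono) simp
      qed simp
    qed simp
  qed
  also have "(\<integral>\<^sup>+ z \<in> A i. (\<integral>\<^sup>+ w \<in> A j. m z * m w \<partial>M) \<partial>M) = a * b"
  proof -
    have "(\<integral>\<^sup>+ z \<in> A i. (\<integral>\<^sup>+ w \<in> A j. m z * m w \<partial>M) \<partial>M)
        = (\<integral>\<^sup>+ z \<in> A i. m z * b \<partial>M)"
      unfolding b_def
    proof (intro nn_integral_cong)
      fix x
      have "(\<integral>\<^sup>+ w. m x * (m w * indicator (A j) w) \<partial>M) = m x * (\<integral>\<^sup>+ w. m w * indicator (A j) w \<partial>M)"
        by (rule nn_integral_cmult) (use mmeas Aj in measurable)
      then show "(\<integral>\<^sup>+ w \<in> A j. m x * m w \<partial>M) * indicator (A i) x = m x * (\<integral>\<^sup>+ w \<in> A j. m w \<partial>M) * indicator (A i) x"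
        by (simp add: mult.assoc)
    qed
    also have "\<dots> = a * b"
    proof -
      have "(\<integral>\<^sup>+ z \<in> A i. m z * b \<partial>M) = (\<integral>\<^sup>+ z. (m z * indicator (A i) z) * b \<partial>M)"
        by (simp add: ac_simps)
      also have "\<dots> = (\<integral>\<^sup>+ z. m z * indicator (A i) z \<partial>M) * b"
        by (rule nn_integral_multc) (use mmeas Ai in measurable)
      finally show "(\<integral>\<^sup>+ z \<in> A i. m z * b \<partial>M) = a * b" by (simp add: a_def)
    qed
    finally show ?thesis .
  qed
  finally have low: "a * b \<le> (\<integral>\<^sup>+ z \<in> A i. (\<integral>\<^sup>+ w \<in> A j.
            ennreal (min (\<pi> k z * \<pi> (Suc k) w) (\<pi> k w * \<pi> (Suc k) z)) \<partial>M) \<partial>M)" .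
  define S where "S = {(\<integral>\<^sup>+ z \<in> A j. ennreal (min (\<pi> k z) (\<pi> l z)) \<partial>M) / dmass M (\<pi> k) (A j) | k l j.
           k \<le> N \<and> l \<le> N \<and> (l = k + 1 \<or> k = l + 1) \<and> j \<in> {1..J}}"
  have Sfin: "finite S"
  proof -
    have "S \<subseteq> (\<lambda>(k,l,j). (\<integral>\<^sup>+ z \<in> A j. ennreal (min (\<pi> k z) (\<pi> l z)) \<partial>M) / dmass M (\<pi> k) (A j))
               ` ({..N} \<times> {..N} \<times> {1..J})"
    proof
      fix x assume "x \<in> S"
      then obtain k l j where x: "x = (\<integral>\<^sup>+ z \<in> A j. ennreal (min (\<pi> k z) (\<pi> l z)) \<partial>M) / dmass M (\<pi> k) (A j)"
        and c: "k \<le> N" "l \<le> N" "j \<in> {1..J}" unfolding S_def by blast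
      show "x \<in> (\<lambda>(k,l,j). (\<integral>\<^sup>+ z \<in> A j. ennreal (min (\<pi> k z) (\<pi> l z)) \<partial>M) / dmass M (\<pi> k) (A j))
               ` ({..N} \<times> {..N} \<times> {1..J})"
        by (rule image_eqI[of _ _ "(k,l,j)"]) (use x c in auto)
    qed
    then show ?thesis by (rule finite_subset) auto
  qed
  have ov: "overlap M \<pi> N A J = Min S" unfolding overlap_def S_def ..
  have d1: "overlap M \<pi> N A J \<le> a / P"
  proof -
    have e: "a / P = (\<integral>\<^sup>+ z \<in> A i. ennreal (min (\<pi> k z) (\<pi> (Suc k) z)) \<partial>M) / dmass M (\<pi> k) (A i)"
      unfolding a_def P_def m_def ..
    have "a / P \<in> S" unfolding S_def e using k0 k1 ij
      by (intro CollectI exI[of _ k] exI[of _ "Suc k"] exI[of _ i] conjI refl) simp_all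
    then show ?thesis unfolding ov using Sfin by (rule Min_le[rotated])
  qed
  have d2: "overlap M \<pi> N A J \<le> b / Q"
  proof -
    have e: "b / Q = (\<integral>\<^sup>+ z \<in> A j. ennreal (min (\<pi> (Suc k) z) (\<pi> k z)) \<partial>M) / dmass M (\<pi> (Suc k)) (A j)"
      unfolding b_def Q_def m_def by (simp add: min.commute)
    have "b / Q \<in> S" unfolding S_def e using k0 k1 ij
      by (intro CollectI exI[of _ "Suc k"] exI[of _ k] exI[of _ j] conjI refl) simp_all
    then show ?thesis unfolding ov using Sfin by (rule Min_le[rotated])
  qed
  have "(overlap M \<pi> N A J)\<^sup>2 \<le> (a / P) * (b / Q)"
    unfolding power2_eq_square using d1 d2 by (intro mult_mono) auto
  also have "(a / P) * (b / Q) = (a * b) / (P * Q)"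
    unfolding divide_ennreal_def using Pf Qf by (simp add: ennreal_inverse_mult ac_simps)
  also have "\<dots> \<le> (\<integral>\<^sup>+ z \<in> A i. (\<integral>\<^sup>+ w \<in> A j.
            ennreal (min (\<pi> k z * \<pi> (Suc k) w) (\<pi> k w * \<pi> (Suc k) z)) \<partial>M) \<partial>M) / (P * Q)"
    using low by (rule divide_right_mono_ennreal)
  finally show ?thesis unfolding P_def Q_def .
qed

end
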